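(* Let $\theta\in k$ and let $(A,R)$ be a Rota--Baxter algebra of weight $\theta$. For all $b_1,\ldots,b_n\in A$, $$ \sum_{\sigma\in S_n}R\Big(\cdots R\big(R(b_{\sigma(1)})b_{\sigma(2)}\big)\cdots\Big)b_{\sigma(n)}=\sum_{\{P_1,\ldots,P_k\}}b_{P_1}\ast_\theta\cdots\ast_\theta b_{P_k}, $$ where the sum runs over all set partitions $\{P_1,\ldots,P_k\}$ of $\{1,\ldots,n\}$ with blocks indexed so that $\max P_1<\cdots<\max P_k$, and for a block $P_i=\{p_1<\cdots<p_h\}$, $$ b_{P_i}:=\sum_{\sigma\in S_{h-1}}\Big(\cdots\big((b_{p_h}\triangleright_\theta b_{p_{\sigma(h-1)}})\triangleright_\theta b_{p_{\sigma(h-2)}}\big)\cdots\triangleright_\theta b_{p_{\sigma(2)}}\Big)\triangleright_\theta b_{p_{\sigma(1)}} $$ (for $h=1$, $b_{P_i}=b_{p_1}$).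
   Context: $k$ is a field of characteristic zero. A Rota--Baxter algebra of weight $\theta$ is a unital associative algebra $A$ with a linear map $R:A\to A$ such that $R(x)R(y)=R(R(x)y+xR(y))+\theta R(xy)$ for all $x,y\in A$. Define $a\triangleright_\theta b:=R(a)b-bR(a)-\theta ba$ and the (associative) double product $a\ast_\theta b:=R(a)b+aR(b)+\theta ab$. *)

theory Defs
  imports Complex_Main "HOL-Library.Disjoint_Sets" "HOL-Combinatorics.Permutations"
begin

definition k_algebra :: "('k::field \<Rightarrow> 'a::ring_1 \<Rightarrow> 'a) \<Rightarrow> bool" where
  "k_algebra scal \<longleftrightarrow> module scal \<and>
     (\<forall>c x y. scal c (x * y) = scal c x * y \<and> scal c (x * y) = x * scal c y)"

definition rota_baxter :: "('k::field \<Rightarrow> 'a::ring_1 \<Rightarrow> 'a) \<Rightarrow> 'k \<Rightarrow> ('a \<Rightarrow> 'a) \<Rightarrow> bool" where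
  "rota_baxter scal \<theta> R \<longleftrightarrow> k_algebra scal \<and> Vector_Spaces.linear scal scal R \<and>
     (\<forall>x y. R x * R y = R (R x * y + x * R y) + scal \<theta> (R (x * y)))"

definition rb_tri :: "('k \<Rightarrow> 'a::ring_1 \<Rightarrow> 'a) \<Rightarrow> 'k \<Rightarrow> ('a \<Rightarrow> 'a) \<Rightarrow> 'a \<Rightarrow> 'a \<Rightarrow> 'a" where
  "rb_tri scal \<theta> R a b = R a * b - b * R a - scal \<theta> (b * a)"

definition rb_star :: "('k \<Rightarrow> 'a::ring_1 \<Rightarrow> 'a) \<Rightarrow> 'k \<Rightarrow> ('a \<Rightarrow> 'a) \<Rightarrow> 'a \<Rightarrow> 'a \<Rightarrow> 'a" where
  "rb_star scal \<theta> R a b = R a * b + a * R b + scal \<theta> (a * b)"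

text \<open>Iterated double product x1 * (x2 * ( ... * xk)) (the double product is associative).\<close>
fun star_list :: "('a::zero \<Rightarrow> 'a \<Rightarrow> 'a) \<Rightarrow> 'a list \<Rightarrow> 'a" where
  "star_list st [] = 0"
| "star_list st [x] = x"
| "star_list st (x # y # xs) = st x (star_list st (y # xs))"

definition lhs_term :: "('a::ring_1 \<Rightarrow> 'a) \<Rightarrow> (nat \<Rightarrow> 'a) \<Rightarrow> nat \<Rightarrow> (nat \<Rightarrow> nat) \<Rightarrow> 'a" where
  "lhs_term R b n \<sigma> = foldl (\<lambda>acc i. R acc * b (\<sigma> i)) (b (\<sigma> 1)) [2..<n+1]"

definition block_term :: "('k \<Rightarrow> 'a::ring_1 \<Rightarrow> 'a) \<Rightarrow> 'k \<Rightarrow> ('a \<Rightarrow> 'a) \<Rightarrow> (nat \<Rightarrow> 'a) \<Rightarrow> nat set \<Rightarrow> 'a" where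
  "block_term scal \<theta> R b P =
     (let ps = sorted_list_of_set P; h = card P in
      \<Sum>\<sigma> \<in> {\<sigma>. \<sigma> permutes {1..h-1}}.
        foldl (\<lambda>acc i. rb_tri scal \<theta> R acc (b (ps ! (\<sigma> i - 1)))) (b (ps ! (h - 1))) (rev [1..<h]))"

definition blocks_by_max :: "nat set set \<Rightarrow> nat set list" where
  "blocks_by_max Q = map (\<lambda>m. THE B. B \<in> Q \<and> m \<in> B) (sorted_list_of_set (Max ` Q))"

end

theory Submission
  imports Defs "HOL-Combinatorics.Multiset_Permutations"
begin

lemma RI1:
  assumes "finite A"
  shows "(\<Sum>Y\<in>Pow A. \<Sum>y\<in>Y. h y Y) = (\<Sum>y\<in>A. \<Sum>Z\<in>Pow (A - {y}). h y (insert y Z))"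
proof -
  have fin: "finite Y" if "Y \<in> Pow A" for Y using assms that finite_subset by auto
  have "(\<Sum>Y\<in>Pow A. \<Sum>y\<in>Y. h y Y) = (\<Sum>(Y,y)\<in>Sigma (Pow A) (\<lambda>Y. Y). h y Y)"
    by (rule sum.Sigma) (use assms fin in auto)
  also have "\<dots> = (\<Sum>(y,Z)\<in>Sigma A (\<lambda>y. Pow (A - {y})). h y (insert y Z))"
    by (rule sum.reindex_bij_witness[where i="\<lambda>(y,Z). (insert y Z, y)" and j="\<lambda>(Y,y). (y, Y - {y})"])
       (auto simp: insert_absorb)
  also have "\<dots> = (\<Sum>y\<in>A. \<Sum>Z\<in>Pow (A - {y}). h y (insert y Z))"
    by (rule sum.Sigma[symmetric]) (use assms in auto)
  finally show ?thesis .
qed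

lemma RI2:
  assumes "finite A"
  shows "(\<Sum>Y\<in>Pow A. \<Sum>x\<in>A - Y. h x Y) = (\<Sum>x\<in>A. \<Sum>Y\<in>Pow (A - {x}). h x Y)"
proof -
  have "(\<Sum>Y\<in>Pow A. \<Sum>x\<in>A - Y. h x Y) = (\<Sum>(Y,x)\<in>Sigma (Pow A) (\<lambda>Y. A - Y). h x Y)"
    by (rule sum.Sigma) (use assms in auto)
  also have "\<dots> = (\<Sum>(x,Y)\<in>Sigma A (\<lambda>x. Pow (A - {x})). h x Y)"
    by (rule sum.reindex_bij_witness[where i="\<lambda>(x,Y). (Y, x)" and j="\<lambda>(Y,x). (x, Y)"])
       auto
  also have "\<dots> = (\<Sum>x\<in>A. \<Sum>Y\<in>Pow (A - {x}). h x Y)"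
    by (rule sum.Sigma[symmetric]) (use assms in auto)
  finally show ?thesis .
qed

lemma bridge:
  "(\<Sum>\<sigma>\<in>{\<sigma>. \<sigma> permutes {1..k::nat}}. g (map \<sigma> [1..<k+1])) = (\<Sum>xs\<in>permutations_of_set {1..k}. g xs)"
proof -
  let ?P = "{\<sigma>. \<sigma> permutes {1..k::nat}}"
  let ?f = "\<lambda>\<sigma>. map \<sigma> [1..<k+1]"
  have inj: "inj_on ?f ?P"
  proof (rule inj_onI)
    fix \<sigma> \<tau> assume s: "\<sigma> \<in> ?P" "\<tau> \<in> ?P" and e: "?f \<sigma> = ?f \<tau>"
    show "\<sigma> = \<tau>"
    proof
      fix x show "\<sigma> x = \<tau> x"
      proof (cases "x \<in> {1..k}")
        case True then have "x \<in> set [1..<k+1]" by auto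
        with e show ?thesis by (metis map_eq_conv)
      next
        case False then show ?thesis using s by (simp add: permutes_not_in)
      qed
    qed
  qed
  have sub: "?f ` ?P \<subseteq> permutations_of_set {1..k}"
  proof
    fix xs assume "xs \<in> ?f ` ?P"
    then obtain \<sigma> where s: "\<sigma> permutes {1..k}" and xs: "xs = ?f \<sigma>" by auto
    have "set xs = \<sigma> ` {1..k}" using xs by (auto simp: atLeastLessThanSuc_atLeastAtMost)
    also have "\<dots> = {1..k}" using s by (rule permutes_image)
    finally have "set xs = {1..k}" .
    moreover have "distinct xs" unfolding xs distinct_map using permutes_inj_on[OF s] by simp
    ultimately show "xs \<in> permutations_of_set {1..k}" by auto
  qed
  have "card (?f ` ?P) = card ?P" using inj by (rule card_image)
  also have "\<dots> = fact k" by (rule card_permutations) auto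
  also have "\<dots> = card (permutations_of_set {1..k})" by simp
  finally have "?f ` ?P = permutations_of_set {1..k}"
    by (intro card_subset_eq sub) auto
  then show ?thesis using sum.reindex[OF inj, of g] by simp
qed

lemma sorted_insert_max:
  assumes "finite M" "\<forall>x\<in>M. x < (m::nat)"
  shows "sorted_list_of_set (insert m M) = sorted_list_of_set M @ [m]"
proof (rule sorted_distinct_set_unique)
  show "sorted (sorted_list_of_set M @ [m])" using assms by (auto simp: sorted_append less_imp_le)
  show "distinct (sorted_list_of_set M @ [m])" using assms by auto
  show "sorted (sorted_list_of_set (insert m M))" by (rule sorted_sorted_list_of_set)
  show "distinct (sorted_list_of_set (insert m M))" by (rule distinct_sorted_list_of_set)
  have "set (sorted_list_of_set (insert m M)) = insert m M"
    using assms(1) by (rule set_sorted_list_of_set[OF finite_insert[THEN iffD2]])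
  then show "set (sorted_list_of_set (insert m M)) = set (sorted_list_of_set M @ [m])"
    using assms(1) by auto
qed

locale rbx =
  fixes scal :: "'k::field_char_0 \<Rightarrow> 'a::ring_1 \<Rightarrow> 'a" and \<theta> :: 'k and R :: "'a \<Rightarrow> 'a"
    and b :: "nat \<Rightarrow> 'a"
  assumes rb: "rota_baxter scal \<theta> R"
begin

lemma modu: "module scal" using rb by (simp add: rota_baxter_def k_algebra_def)
lemma lin: "Vector_Spaces.linear scal scal R" using rb by (simp add: rota_baxter_def)
lemma scal_mult1: "scal c (x * y) = scal c x * y" using rb by (simp add: rota_baxter_def k_algebra_def)
lemma scal_mult2: "scal c (x * y) = x * scal c y" using rb unfolding rota_baxter_def k_algebra_def by blast
lemma rbid: "R x * R y = R (R x * y + x * R y) + scal \<theta> (R (x * y))"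
  using rb by (simp add: rota_baxter_def)

lemma R_add: "R (x + y) = R x + R y"
  using lin by (simp add: Vector_Spaces.linear_def module_hom_def module_hom_axioms_def)
lemma R_scal: "R (scal c x) = scal c (R x)"
  using lin by (simp add: Vector_Spaces.linear_def module_hom_def module_hom_axioms_def)
lemma R_zero: "R 0 = 0" using R_add[of 0 0] by simp
lemma R_neg: "R (- x) = - R x" using minus_unique[of "R x" "R(-x)"] R_add[of x "-x"] R_zero by simp
lemma R_diff: "R (x - y) = R x - R y" using R_add[of x "-y"] R_neg by simp
lemma R_sum: "R (sum f A) = (\<Sum>a\<in>A. R (f a))"
  by (induction A rule: infinite_finite_induct) (auto simp: R_zero R_add)

lemma scal_add: "scal c (x + y) = scal c x + scal c y"
  using modu by (simp add: module.scale_right_distrib)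
lemma scal_zero: "scal c 0 = 0" using scal_add[of c 0 0] by simp
lemma scal_neg: "scal c (- x) = - scal c x" using minus_unique[of "scal c x" "scal c (-x)"] scal_add[of c x "-x"] scal_zero by simp
lemma scal_diff: "scal c (x - y) = scal c x - scal c y" using scal_add[of c x "-y"] scal_neg by simp
lemma scal_sum: "scal c (sum f A) = (\<Sum>a\<in>A. scal c (f a))"
  by (induction A rule: infinite_finite_induct) (auto simp: scal_zero scal_add)

lemma rbid2: "R (R x * y + x * (R y + scal \<theta> y)) = R x * R y"
proof -
  have "scal \<theta> (R (x * y)) = R (x * scal \<theta> y)" by (metis R_scal scal_mult2)
  then show ?thesis by (simp add: rbid distrib_left R_add add.assoc)
qed

lemma tri_sum: "rb_tri scal \<theta> R (sum f A) c = (\<Sum>a\<in>A. rb_tri scal \<theta> R (f a) c)"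
  by (induction A rule: infinite_finite_induct)
     (auto simp: rb_tri_def R_zero R_add scal_zero scal_add distrib_left distrib_right algebra_simps)

fun lv :: "nat list \<Rightarrow> 'a" where
  "lv [] = 0" | "lv [x] = b x" | "lv (x # y # ys) = R (lv (y # ys)) * b x"

definition F :: "nat set \<Rightarrow> 'a" where
  "F X = (\<Sum>xs\<in>permutations_of_set X. lv xs)"

definition rho :: "nat set \<Rightarrow> 'a" where
  "rho X = (if X = {} then 1 else R (F X))"

lemma F_empty: "F {} = 0" by (simp add: F_def)

lemma sum_perm_cons:
  assumes "finite X" "X \<noteq> {}"
  shows "(\<Sum>xs\<in>permutations_of_set X. g xs) = (\<Sum>x\<in>X. \<Sum>xs\<in>permutations_of_set (X - {x}). g (x # xs))"
proof -
  have "(\<Sum>xs\<in>permutations_of_set X. g xs) = (\<Sum>x\<in>X. \<Sum>xs\<in>(\<lambda>xs. x # xs) ` permutations_of_set (X - {x}). g xs)"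
    unfolding permutations_of_set_nonempty[OF assms(2)]
    by (rule sum.UNION_disjoint) (use assms in auto)
  also have "\<dots> = (\<Sum>x\<in>X. \<Sum>xs\<in>permutations_of_set (X - {x}). g (x # xs))"
    by (rule sum.cong[OF refl], subst sum.reindex) (auto simp: inj_on_def)
  finally show ?thesis .
qed

lemma F_rec:
  assumes "finite X"
  shows "F X = (\<Sum>x\<in>X. rho (X - {x}) * b x)"
proof (cases "X = {}")
  case True then show ?thesis by (simp add: F_empty)
next
  case False
  have "F X = (\<Sum>x\<in>X. \<Sum>xs\<in>permutations_of_set (X - {x}). lv (x # xs))"
    unfolding F_def by (rule sum_perm_cons[OF assms False])
  also have "\<dots> = (\<Sum>x\<in>X. rho (X - {x}) * b x)"
  proof (rule sum.cong[OF refl])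
    fix x assume "x \<in> X"
    show "(\<Sum>xs\<in>permutations_of_set (X - {x}). lv (x # xs)) = rho (X - {x}) * b x"
    proof (cases "X - {x} = {}")
      case True then have e: "X - {x} = {}" by simp
      show ?thesis unfolding e by (simp add: rho_def)
    next
      case False
      have "(\<Sum>xs\<in>permutations_of_set (X - {x}). lv (x # xs)) =
            (\<Sum>xs\<in>permutations_of_set (X - {x}). R (lv xs) * b x)"
      proof (rule sum.cong[OF refl])
        fix xs assume "xs \<in> permutations_of_set (X - {x})"
        then have "set xs = X - {x}" by (rule permutations_of_setD(1))
        then have "xs \<noteq> []" using False by (metis set_empty)
        then show "lv (x # xs) = R (lv xs) * b x" by (cases xs) auto
      qed
      also have "\<dots> = rho (X - {x}) * b x"
        using False by (simp add: rho_def F_def R_sum sum_distrib_right)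
      finally show ?thesis .
    qed
  qed
  finally show ?thesis .
qed

fun tv :: "nat \<Rightarrow> nat list \<Rightarrow> 'a" where
  "tv m [] = b m" | "tv m (y # ys) = rb_tri scal \<theta> R (tv m ys) (b y)"

definition T :: "nat \<Rightarrow> nat set \<Rightarrow> 'a" where
  "T m Y = (\<Sum>ys\<in>permutations_of_set Y. tv m ys)"

lemma T_empty: "T m {} = b m" by (simp add: T_def)

lemma T_rec:
  assumes "finite Y" "Y \<noteq> {}"
  shows "T m Y = (\<Sum>y\<in>Y. rb_tri scal \<theta> R (T m (Y - {y})) (b y))"
  unfolding T_def by (subst sum_perm_cons[OF assms]) (simp add: tri_sum)

definition kap :: "nat \<Rightarrow> nat set \<Rightarrow> 'a" where
  "kap m Y = R (T m Y) + scal \<theta> (T m Y)"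

lemma star_R:
  assumes "finite A" "m \<notin> A"
    and eq: "F (insert m A) = (\<Sum>Y\<in>Pow A. rho (A - Y) * T m Y + F (A - Y) * kap m Y)"
  shows "R (F (insert m A)) = (\<Sum>Y\<in>Pow A. rho (A - Y) * R (T m Y))"
proof -
  have "R (F (insert m A)) = (\<Sum>Y\<in>Pow A. R (rho (A - Y) * T m Y + F (A - Y) * kap m Y))"
    by (simp add: eq R_sum)
  also have "\<dots> = (\<Sum>Y\<in>Pow A. rho (A - Y) * R (T m Y))"
  proof (rule sum.cong[OF refl])
    fix Y assume "Y \<in> Pow A"
    show "R (rho (A - Y) * T m Y + F (A - Y) * kap m Y) = rho (A - Y) * R (T m Y)"
    proof (cases "A - Y = {}")
      case True then have e: "A - Y = {}" by simp
      show ?thesis unfolding e by (simp add: rho_def F_empty)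
    next
      case False then show ?thesis by (simp add: rho_def kap_def rbid2)
    qed
  qed
  finally show ?thesis .
qed

lemma main:
  "finite A \<Longrightarrow> m \<notin> A \<Longrightarrow>
   F (insert m A) = (\<Sum>Y\<in>Pow A. rho (A - Y) * T m Y + F (A - Y) * kap m Y)"
proof (induction A arbitrary: m rule: finite_psubset_induct)
  case (psubset A m)
  have finA: "finite A" by fact
  have IH: "rho (insert m (A - {x})) = (\<Sum>Y\<in>Pow (A - {x}). rho (A - {x} - Y) * R (T m Y))"
    if "x \<in> A" for x
  proof -
    have "F (insert m (A - {x})) = (\<Sum>Y\<in>Pow (A - {x}). rho (A - {x} - Y) * T m Y + F (A - {x} - Y) * kap m Y)"
      using that psubset.prems by (intro psubset.IH) auto
    then have "R (F (insert m (A - {x}))) = (\<Sum>Y\<in>Pow (A - {x}). rho (A - {x} - Y) * R (T m Y))"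
      by (rule star_R[rotated 2]) (use psubset in auto)
    then show ?thesis by (simp add: rho_def)
  qed
  define S1 where "S1 = (\<Sum>x\<in>A. \<Sum>Y\<in>Pow (A - {x}). rho (A - {x} - Y) * R (T m Y) * b x)"
  define S2 where "S2 = (\<Sum>x\<in>A. \<Sum>Y\<in>Pow (A - {x}). rho (A - {x} - Y) * b x * kap m Y)"
  have L: "F (insert m A) = rho A * b m + S1"
  proof -
    have "F (insert m A) = (\<Sum>x\<in>insert m A. rho (insert m A - {x}) * b x)"
      using finA by (simp add: F_rec)
    also have "\<dots> = rho (insert m A - {m}) * b m + (\<Sum>x\<in>A. rho (insert m A - {x}) * b x)"
      using finA psubset.prems by simp
    also have "insert m A - {m} = A" using psubset.prems by auto
    also have "(\<Sum>x\<in>A. rho (insert m A - {x}) * b x) = (\<Sum>x\<in>A. rho (insert m (A - {x})) * b x)"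
      by (rule sum.cong[OF refl]) (use psubset.prems in \<open>auto simp: insert_Diff_if\<close>)
    also have "\<dots> = S1"
      unfolding S1_def by (rule sum.cong[OF refl]) (simp add: IH sum_distrib_right)
    finally show ?thesis .
  qed
  have Tsplit: "rho (A - Y) * T m Y = (if Y = {} then rho A * b m else 0)
      + (\<Sum>y\<in>Y. rho (A - Y) * R (T m (Y - {y})) * b y)
      - (\<Sum>y\<in>Y. rho (A - Y) * b y * kap m (Y - {y}))" if "Y \<in> Pow A" for Y
  proof (cases "Y = {}")
    case True then show ?thesis by (simp add: T_empty)
  next
    case False
    have finY: "finite Y" using that finA finite_subset by auto
    have "rho (A - Y) * T m Y = (\<Sum>y\<in>Y. rho (A - Y) * rb_tri scal \<theta> R (T m (Y - {y})) (b y))"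
      by (simp add: T_rec[OF finY False] sum_distrib_left)
    also have "\<dots> = (\<Sum>y\<in>Y. rho (A - Y) * R (T m (Y - {y})) * b y - rho (A - Y) * b y * kap m (Y - {y}))"
      by (rule sum.cong[OF refl])
         (simp add: rb_tri_def kap_def distrib_left right_diff_distrib mult.assoc scal_mult2 algebra_simps)
    finally show ?thesis using False by (simp add: sum_subtractf)
  qed
  have P1: "(\<Sum>Y\<in>Pow A. \<Sum>y\<in>Y. rho (A - Y) * R (T m (Y - {y})) * b y) = S1"
    unfolding S1_def RI1[OF finA]
    by (intro sum.cong refl) (auto simp: insert_Diff_if Diff_insert2[symmetric] intro!: arg_cong2[where f="(*)"] arg_cong[where f=rho] arg_cong[where f="\<lambda>Z. R (T m Z)"])
  have P2: "(\<Sum>Y\<in>Pow A. \<Sum>y\<in>Y. rho (A - Y) * b y * kap m (Y - {y})) = S2"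
    unfolding S2_def RI1[OF finA]
    by (intro sum.cong refl) (auto simp: insert_Diff_if Diff_insert2[symmetric] intro!: arg_cong2[where f="(*)"] arg_cong[where f=rho] arg_cong[where f="kap m"])
  have P3: "(\<Sum>Y\<in>Pow A. F (A - Y) * kap m Y) = S2"
  proof -
    have "(\<Sum>Y\<in>Pow A. F (A - Y) * kap m Y) = (\<Sum>Y\<in>Pow A. \<Sum>x\<in>A - Y. rho (A - Y - {x}) * b x * kap m Y)"
      using finA by (simp add: F_rec sum_distrib_right)
    also have "\<dots> = (\<Sum>x\<in>A. \<Sum>Y\<in>Pow (A - {x}). rho (A - Y - {x}) * b x * kap m Y)"
      by (rule RI2[OF finA])
    also have "\<dots> = S2" unfolding S2_def by (simp add: Diff_insert2[symmetric] Diff_insert[symmetric] insert_commute)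
    finally show ?thesis .
  qed
  have "(\<Sum>Y\<in>Pow A. rho (A - Y) * T m Y + F (A - Y) * kap m Y)
      = (\<Sum>Y\<in>Pow A. rho (A - Y) * T m Y) + (\<Sum>Y\<in>Pow A. F (A - Y) * kap m Y)"
    by (rule sum.distrib)
  also have "(\<Sum>Y\<in>Pow A. rho (A - Y) * T m Y) = (\<Sum>Y\<in>Pow A. (if Y = {} then rho A * b m else 0)
      + (\<Sum>y\<in>Y. rho (A - Y) * R (T m (Y - {y})) * b y)
      - (\<Sum>y\<in>Y. rho (A - Y) * b y * kap m (Y - {y})))"
    by (rule sum.cong[OF refl]) (rule Tsplit)
  also have "\<dots> = rho A * b m + S1 - S2"
    using finA by (simp add: sum.distrib sum_subtractf P1 P2)
  finally show ?case using L P3 by simp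
qed

end


lemma the_block:
  assumes "partition_on S Q" "B \<in> Q" "m \<in> B"
  shows "(THE B. B \<in> Q \<and> m \<in> B) = B"
  by (rule the_equality) (use assms in \<open>auto simp: partition_on_def pairwise_def disjnt_def\<close>)

lemma the_block_ex:
  assumes "partition_on S Q" "m \<in> S"
  shows "(THE B. B \<in> Q \<and> m \<in> B) \<in> Q \<and> m \<in> (THE B. B \<in> Q \<and> m \<in> B)"
proof -
  obtain B where B: "B \<in> Q" "m \<in> B" using assms by (auto simp: partition_on_def)
  then show ?thesis using the_block[OF assms(1) B] by simp
qed

lemma part_insert:
  assumes "partition_on (A - Y) Q'" "Y \<subseteq> A" "m \<notin> A"
  shows "partition_on (insert m A) (insert (insert m Y) Q')"
proof -
  have U: "\<Union>Q' = A - Y" using assms(1) by (auto simp: partition_on_def)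
  have d: "disjnt (insert m Y) (\<Union>Q')" unfolding U using assms(3) by (auto simp: disjnt_def)
  have "insert m A - insert m Y = A - Y" using assms(3) by auto
  then show ?thesis unfolding partition_on_insert[OF d] using assms by auto
qed

lemma part_decomp:
  assumes "finite A" "m \<notin> A"
  shows "(\<Sum>Q\<in>{Q. partition_on (insert m A) Q}. f Q) =
         (\<Sum>Y\<in>Pow A. \<Sum>Q'\<in>{Q. partition_on (A - Y) Q}. f (insert (insert m Y) Q'))"
proof -
  let ?S = "insert m A"
  let ?T = "Sigma (Pow A) (\<lambda>Y. {Q. partition_on (A - Y) Q})"
  let ?bl = "\<lambda>Q. THE B. B \<in> Q \<and> m \<in> B"
  have "(\<Sum>Y\<in>Pow A. \<Sum>Q'\<in>{Q. partition_on (A - Y) Q}. f (insert (insert m Y) Q'))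
      = (\<Sum>(Y,Q')\<in>?T. f (insert (insert m Y) Q'))"
    by (rule sum.Sigma) (use assms in \<open>auto intro: finitely_many_partition_on\<close>)
  also have "(\<Sum>(Y,Q')\<in>?T. f (insert (insert m Y) Q')) = (\<Sum>Q\<in>{Q. partition_on ?S Q}. f Q)"
  proof (rule sum.reindex_bij_witness[where j="\<lambda>(Y,Q'). insert (insert m Y) Q'"
        and i="\<lambda>Q. (?bl Q - {m}, Q - {?bl Q})"])
    fix p assume p: "p \<in> ?T"
    obtain Y Q' where pq: "p = (Y, Q')" by (cases p)
    have Y: "Y \<subseteq> A" and Q': "partition_on (A - Y) Q'" using p pq by auto
    have P: "partition_on ?S (insert (insert m Y) Q')" by (rule part_insert[OF Q' Y assms(2)])
    show "(case p of (Y, Q') \<Rightarrow> insert (insert m Y) Q') \<in> {Q. partition_on ?S Q}"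
      using P pq by simp
    have tb: "?bl (insert (insert m Y) Q') = insert m Y" by (rule the_block[OF P]) auto
    have mY: "m \<notin> Y" using Y assms(2) by auto
    have nQ: "insert m Y \<notin> Q'"
    proof
      assume "insert m Y \<in> Q'"
      then have "m \<in> \<Union>Q'" by auto
      then show False using Q' assms(2) by (auto simp: partition_on_def)
    qed
    show "(\<lambda>Q. (?bl Q - {m}, Q - {?bl Q})) (case p of (Y, Q') \<Rightarrow> insert (insert m Y) Q') = p"
      using pq tb mY nQ by auto
  next
    fix Q assume Q: "Q \<in> {Q. partition_on ?S Q}"
    then have Qp: "partition_on ?S Q" by simp
    define B where "B = ?bl Q"
    have B: "B \<in> Q" "m \<in> B" using the_block_ex[OF Qp] by (auto simp: B_def)
    have BS: "B \<subseteq> ?S" using B Qp by (auto simp: partition_on_def)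
    have ins: "insert m (B - {m}) = B" using B by auto
    have insQ: "insert B (Q - {B}) = Q" using B by auto
    show "(case (?bl Q - {m}, Q - {?bl Q}) of (Y, Q') \<Rightarrow> insert (insert m Y) Q') = Q"
      using ins insQ by (simp add: B_def[symmetric])
    have d: "disjnt B (\<Union>(Q - {B}))"
      using Qp B by (auto simp: partition_on_def pairwise_def disjnt_def)
    have "partition_on ?S (insert B (Q - {B}))" using insQ Qp by simp
    then have "partition_on (?S - B) (Q - {B})" unfolding partition_on_insert[OF d] by simp
    moreover have "?S - B = A - (B - {m})" using B assms(2) by auto
    ultimately show "(?bl Q - {m}, Q - {?bl Q}) \<in> ?T" using BS B by (auto simp: B_def[symmetric])
  qed (simp split: prod.splits)
  finally show ?thesis by simp
qed

lemma bbm_snoc: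
  assumes "partition_on X Q'" "finite X" "finite B" "m \<in> B" "\<forall>x\<in>B. x \<le> (m::nat)"
    "\<forall>x\<in>X. x < m" "disjnt B X"
  shows "blocks_by_max (insert B Q') = blocks_by_max Q' @ [B]"
proof -
  have finQ: "finite Q'" using assms(2,1) by (rule finite_elements)
  have MB: "Max B = m" using assms(3,4,5) by (intro Max_eqI) auto
  have lt: "\<forall>x\<in>Max ` Q'. x < m"
  proof
    fix x assume "x \<in> Max ` Q'"
    then obtain P where P: "P \<in> Q'" "x = Max P" by auto
    have "P \<subseteq> X" "P \<noteq> {}" using P assms(1) by (auto simp: partition_on_def)
    moreover have "finite P" using \<open>P \<subseteq> X\<close> assms(2) finite_subset by auto
    ultimately have "x \<in> X" using P Max_in by auto
    then show "x < m" using assms(6) by auto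
  qed
  have sl: "sorted_list_of_set (Max ` insert B Q') = sorted_list_of_set (Max ` Q') @ [m]"
    using sorted_insert_max[OF finite_imageI[OF finQ] lt] MB by simp
  have fm: "(THE B'. B' \<in> insert B Q' \<and> m \<in> B') = B"
  proof (rule the_equality)
    fix B' assume "B' \<in> insert B Q' \<and> m \<in> B'"
    moreover have "m \<notin> X" using assms(6) by auto
    ultimately show "B' = B" using assms(1) by (auto simp: partition_on_def)
  qed (use assms(4) in simp)
  have fo: "(THE B'. B' \<in> insert B Q' \<and> x \<in> B') = (THE B'. B' \<in> Q' \<and> x \<in> B')"
    if "x \<in> set (sorted_list_of_set (Max ` Q'))" for x
  proof -
    have "x \<in> Max ` Q'" using that finQ by simp
    then obtain P where P: "P \<in> Q'" "x = Max P" by auto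
    have "P \<subseteq> X" "P \<noteq> {}" using P assms(1) by (auto simp: partition_on_def)
    moreover have "finite P" using \<open>P \<subseteq> X\<close> assms(2) finite_subset by auto
    ultimately have "x \<in> X" using P Max_in by auto
    then have "x \<notin> B" using assms(7) by (auto simp: disjnt_def)
    then have "(\<lambda>B'. B' \<in> insert B Q' \<and> x \<in> B') = (\<lambda>B'. B' \<in> Q' \<and> x \<in> B')" by auto
    then show ?thesis by simp
  qed
  show ?thesis unfolding blocks_by_max_def sl using fm fo by simp
qed

context rbx begin
abbreviation st where "st \<equiv> rb_star scal \<theta> R"

lemma R_star: "R (st a c) = R a * R c"
  unfolding rb_star_def by (subst R_add) (simp only: rbid R_scal)
lemma scal_central: "scal c x = scal c 1 * x"
  using scal_mult1[of c 1 x] by simp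

lemma scal_left_comm: "x * (scal c 1 * y) = scal c 1 * (x * y)"
proof -
  have "scal c 1 * y = scal c y" using scal_mult1[of c 1 y] by simp
  then have "x * (scal c 1 * y) = x * scal c y" by simp
  also have "\<dots> = scal c (x * y)" by (rule scal_mult2[symmetric])
  also have "\<dots> = scal c 1 * (x * y)" by (rule scal_central)
  finally show ?thesis .
qed

lemma star_assoc: "st a (st c d) = st (st a c) d"
proof -
  define t where "t = scal \<theta> 1"
  have t1: "scal \<theta> x = t * x" for x unfolding t_def by (rule scal_central)
  have t2: "x * (t * y) = t * (x * y)" for x y unfolding t_def by (rule scal_left_comm)
  have e1: "st a (st c d) = R a * st c d + a * (R c * R d) + t * (a * st c d)"
    unfolding rb_star_def[of scal \<theta> R a "st c d"] R_star t1 ..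
  have e2: "st (st a c) d = (R a * R c) * d + st a c * R d + t * (st a c * d)"
    unfolding rb_star_def[of scal \<theta> R "st a c" d] R_star t1 ..
  have e3: "st x y = R x * y + x * R y + t * (x * y)" for x y
    unfolding rb_star_def t1 ..
  show ?thesis unfolding e1 e2 unfolding e3
    by (simp add: distrib_left distrib_right mult.assoc t2[of "R a" "c * d"] t2[of a "c * d"] add_ac)
qed
lemma star_sum: "st (sum f A) c = (\<Sum>a\<in>A. st (f a) c)"
  by (simp add: rb_star_def R_sum sum_distrib_right scal_sum sum.distrib)

lemma star_list_snoc: "xs \<noteq> [] \<Longrightarrow> star_list st (xs @ [t]) = st (star_list st xs) t"
proof (induction xs)
  case (Cons x xs)
  show ?case
  proof (cases "xs = []")
    case True then show ?thesis by simp
  next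
    case False
    then obtain y ys where xs: "xs = y # ys" by (cases xs) auto
    have "star_list st (xs @ [t]) = st (star_list st xs) t" using Cons.IH False by simp
    then show ?thesis using xs by (simp add: star_assoc)
  qed
qed simp

lemma lv_fold:
  "ys \<noteq> [] \<Longrightarrow> foldl (\<lambda>acc i. R acc * b (\<sigma> i)) (lv (rev ys)) zs = lv (rev (ys @ map \<sigma> zs))"
proof (induction zs arbitrary: ys)
  case (Cons z zs)
  have "R (lv (rev ys)) * b (\<sigma> z) = lv (rev (ys @ [\<sigma> z]))"
    using Cons.prems by (cases "rev ys") auto
  then show ?case using Cons.IH[of "ys @ [\<sigma> z]"] by simp
qed simp

lemma lhs_eq:
  assumes "n \<ge> 1"
  shows "(\<Sum>\<sigma> \<in> {\<sigma>. \<sigma> permutes {1..n}}. lhs_term R b n \<sigma>) = F {1..n}"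
proof -
  have "lhs_term R b n \<sigma> = lv (rev (map \<sigma> [1..<n+1]))" for \<sigma>
  proof -
    have e: "map \<sigma> [1..<n+1] = [\<sigma> 1] @ map \<sigma> [2..<n+1]" using assms by (cases "n = 1") (simp_all add: upt_conv_Cons numeral_2_eq_2)
    have "lhs_term R b n \<sigma> = foldl (\<lambda>acc i. R acc * b (\<sigma> i)) (lv (rev [\<sigma> 1])) [2..<n+1]"
      unfolding lhs_term_def by simp
    also have "\<dots> = lv (rev (map \<sigma> [1..<n+1]))" unfolding e by (rule lv_fold) simp
    finally show ?thesis .
  qed
  then have "(\<Sum>\<sigma> \<in> {\<sigma>. \<sigma> permutes {1..n}}. lhs_term R b n \<sigma>) =
      (\<Sum>xs\<in>permutations_of_set {1..n}. lv (rev xs))"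
    using bridge[of "\<lambda>xs. lv (rev xs)" n] by simp
  also have "\<dots> = (\<Sum>xs\<in>rev ` permutations_of_set {1..n}. lv xs)"
    by (subst sum.reindex) (auto simp: inj_on_def)
  also have "\<dots> = F {1..n}" by (simp add: F_def)
  finally show ?thesis .
qed


lemma tv_foldr: "tv m xs = foldr (\<lambda>y acc. rb_tri scal \<theta> R acc (b y)) xs (b m)"
  by (induction xs) auto

lemma block_eq:
  assumes "finite P" "P \<noteq> {}"
  shows "block_term scal \<theta> R b P = T (Max P) (P - {Max P})"
proof -
  define ps where "ps = sorted_list_of_set P"
  define h where "h = card P"
  define k where "k = h - 1"
  have lps: "length ps = h" using assms by (simp add: ps_def h_def)
  have hpos: "h \<ge> 1" using assms by (simp add: h_def Suc_leI card_gt_0_iff)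
  have hk: "h = k + 1" using hpos by (simp add: k_def)
  have sps: "set ps = P" "distinct ps" "sorted ps" using assms by (auto simp: ps_def)
  have last: "ps ! k = Max P"
  proof (rule Max_eqI[symmetric])
    show "finite P" by fact
    show "ps ! k \<in> P" using sps(1) lps hk nth_mem[of k ps] by simp
    fix y assume "y \<in> P"
    then have "y \<in> set ps" using sps(1) by simp
    then obtain i where "i < h" "ps ! i = y" using lps by (auto simp: in_set_conv_nth)
    then show "y \<le> ps ! k" using sorted_nth_mono[OF sps(3), of i k] lps hk by simp
  qed
  define q where "q j = ps ! (j - 1)" for j
  have injq: "inj_on q {1..k}"
    using sps(2) lps hk by (auto simp: inj_on_def q_def nth_eq_iff_index_eq)
  have img: "q ` {1..k} = P - {Max P}"
  proof
    show "q ` {1..k} \<subseteq> P - {Max P}"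
    proof
      fix x assume "x \<in> q ` {1..k}"
      then obtain j where j: "j \<in> {1..k}" "x = ps ! (j - 1)" by (auto simp: q_def)
      then have "j - 1 < h" "j - 1 \<noteq> k" using hk by auto
      have "x \<in> P" using j(2) \<open>j - 1 < h\<close> sps(1) lps nth_mem[of "j - 1" ps] by simp
      moreover have "x \<noteq> Max P" unfolding last[symmetric] j(2)
        using nth_eq_iff_index_eq[OF sps(2), of "j - 1" k] \<open>j - 1 < h\<close> \<open>j - 1 \<noteq> k\<close> lps hk by simp
      ultimately show "x \<in> P - {Max P}" by simp
    qed
    show "P - {Max P} \<subseteq> q ` {1..k}"
    proof
      fix x assume x: "x \<in> P - {Max P}"
      then have "x \<in> set ps" using sps(1) by simp
      then obtain i where i: "i < h" "ps ! i = x" using lps by (auto simp: in_set_conv_nth)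
      then have "i \<noteq> k" using x last by auto
      then have "Suc i \<in> {1..k}" using i hk by auto
      then show "x \<in> q ` {1..k}" using i by (force simp: q_def)
    qed
  qed
  have pt: "foldl (\<lambda>acc i. rb_tri scal \<theta> R acc (b (ps ! (\<sigma> i - 1)))) (b (ps ! k)) (rev [1..<k+1])
      = tv (Max P) (map q (map \<sigma> [1..<k+1]))" for \<sigma>
    by (simp only: tv_foldr foldr_conv_foldl foldl_map rev_map q_def last o_def)
  have "block_term scal \<theta> R b P =
     (\<Sum>\<sigma> \<in> {\<sigma>. \<sigma> permutes {1..k}}. foldl (\<lambda>acc i. rb_tri scal \<theta> R acc (b (ps ! (\<sigma> i - 1)))) (b (ps ! k)) (rev [1..<k+1]))"
    unfolding block_term_def Let_def ps_def[symmetric] h_def[symmetric] hk by (simp only: diff_add_inverse2)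
  also have "\<dots> = (\<Sum>\<sigma> \<in> {\<sigma>. \<sigma> permutes {1..k}}. tv (Max P) (map q (map \<sigma> [1..<k+1])))"
    by (rule sum.cong[OF refl]) (rule pt)
  also have "\<dots> = (\<Sum>xs\<in>permutations_of_set {1..k}. tv (Max P) (map q xs))"
    by (rule bridge)
  also have "\<dots> = (\<Sum>ys\<in>map q ` permutations_of_set {1..k}. tv (Max P) ys)"
  proof -
    have "inj_on (map q) (permutations_of_set {1..k})" by (rule inj_on_mapI) (use injq in simp)
    then show ?thesis by (simp add: sum.reindex comp_def)
  qed
  also have "\<dots> = T (Max P) (P - {Max P})"
    unfolding T_def img[symmetric] permutations_of_set_image_inj[OF injq] ..
  finally show ?thesis .
qed


definition G :: "nat set \<Rightarrow> 'a" where
  "G S = (\<Sum>Q\<in>{Q. partition_on S Q}. star_list st (map (block_term scal \<theta> R b) (blocks_by_max Q)))"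

lemma G_eq: "finite S \<Longrightarrow> S \<noteq> {} \<Longrightarrow> G S = F S"
proof (induction S rule: finite_psubset_induct)
  case (psubset S)
  define m where "m = Max S"
  define A where "A = S - {m}"
  have mS: "m \<in> S" using psubset m_def Max_in by auto
  have SA: "S = insert m A" and mA: "m \<notin> A" and finA: "finite A"
    using mS psubset by (auto simp: A_def)
  have le: "\<forall>x\<in>S. x \<le> m" using psubset by (auto simp: m_def)
  have Alt: "\<forall>x\<in>A. x < m" using le by (auto simp: A_def less_le)
  have inner: "(\<Sum>Q'\<in>{Q. partition_on (A - Y) Q}. star_list st (map (block_term scal \<theta> R b) (blocks_by_max (insert (insert m Y) Q'))))
      = rho (A - Y) * T m Y + F (A - Y) * kap m Y" if Y: "Y \<in> Pow A" for Y
  proof -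
    have BT: "block_term scal \<theta> R b (insert m Y) = T m Y"
    proof -
      have fin: "finite (insert m Y)" using Y finA finite_subset by auto
      have M: "Max (insert m Y) = m" by (intro Max_eqI fin) (use Y Alt in \<open>auto simp: less_imp_le\<close>)
      have "insert m Y - {m} = Y" using Y mA by auto
      then show ?thesis using block_eq[OF fin] M by simp
    qed
    have snoc: "blocks_by_max (insert (insert m Y) Q') = blocks_by_max Q' @ [insert m Y]"
      if "partition_on (A - Y) Q'" for Q'
      by (rule bbm_snoc[OF that]) (use Y finA Alt finite_subset in \<open>auto simp: disjnt_def less_imp_le\<close>)
    show ?thesis
    proof (cases "A - Y = {}")
      case True
      have e: "{Q. partition_on (A - Y) Q} = {{}}" unfolding True partition_on_empty by simp
      have "blocks_by_max {} = []" by (simp add: blocks_by_max_def)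
      have p: "partition_on (A - Y) {}" unfolding True partition_on_empty ..
      have Fz: "F (A - Y) = 0" unfolding True by (rule F_empty)
      have rz: "rho (A - Y) = 1" unfolding True by (simp add: rho_def)
      show ?thesis unfolding e using \<open>blocks_by_max {} = []\<close> by (simp add: snoc[OF p] BT Fz rz)
    next
      case False
      have "(\<Sum>Q'\<in>{Q. partition_on (A - Y) Q}. star_list st (map (block_term scal \<theta> R b) (blocks_by_max (insert (insert m Y) Q'))))
         = (\<Sum>Q'\<in>{Q. partition_on (A - Y) Q}. st (star_list st (map (block_term scal \<theta> R b) (blocks_by_max Q'))) (T m Y))"
      proof (rule sum.cong[OF refl])
        fix Q' assume "Q' \<in> {Q. partition_on (A - Y) Q}"
        then have Q': "partition_on (A - Y) Q'" by simp
        then have "Q' \<noteq> {}" using False by (auto simp: partition_on_def)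
        moreover have "finite Q'" using finA Q' by (intro finite_elements[of "A - Y"]) auto
        ultimately have "blocks_by_max Q' \<noteq> []"
          by (simp add: blocks_by_max_def sorted_list_of_set_eq_Nil_iff)
        then show "star_list st (map (block_term scal \<theta> R b) (blocks_by_max (insert (insert m Y) Q'))) =
            st (star_list st (map (block_term scal \<theta> R b) (blocks_by_max Q'))) (T m Y)"
          using snoc[OF Q'] BT by (simp add: star_list_snoc)
      qed
      also have "\<dots> = st (G (A - Y)) (T m Y)" by (simp add: G_def star_sum)
      also have "G (A - Y) = F (A - Y)" using psubset.IH[of "A - Y"] False SA mA by auto
      also have "st (F (A - Y)) (T m Y) = rho (A - Y) * T m Y + F (A - Y) * kap m Y"
        using False by (simp add: rho_def kap_def rb_star_def distrib_left scal_mult2 add.assoc)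
      finally show ?thesis .
    qed
  qed
  have "G S = (\<Sum>Y\<in>Pow A. \<Sum>Q'\<in>{Q. partition_on (A - Y) Q}. star_list st (map (block_term scal \<theta> R b) (blocks_by_max (insert (insert m Y) Q'))))"
    unfolding G_def SA by (rule part_decomp[OF finA mA])
  also have "\<dots> = (\<Sum>Y\<in>Pow A. rho (A - Y) * T m Y + F (A - Y) * kap m Y)"
    by (rule sum.cong[OF refl]) (rule inner)
  also have "\<dots> = F S" using main[OF finA mA] SA by simp
  finally show ?case .
qed

end

theorem corollary3p6:
  fixes scal :: "'k::field_char_0 \<Rightarrow> 'a::ring_1 \<Rightarrow> 'a"
    and \<theta> :: 'k and R :: "'a \<Rightarrow> 'a" and b :: "nat \<Rightarrow> 'a" and n :: nat
  assumes "rota_baxter scal \<theta> R"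
    and "n \<ge> 1"
  shows "(\<Sum>\<sigma> \<in> {\<sigma>. \<sigma> permutes {1..n}}. lhs_term R b n \<sigma>) =
         (\<Sum>Q \<in> {Q. partition_on {1..n} Q}.
            star_list (rb_star scal \<theta> R) (map (block_term scal \<theta> R b) (blocks_by_max Q)))"
proof -
  interpret rbx scal \<theta> R b by unfold_locales (rule assms(1))
  have "(\<Sum>\<sigma> \<in> {\<sigma>. \<sigma> permutes {1..n}}. lhs_term R b n \<sigma>) = F {1..n}" by (rule lhs_eq[OF assms(2)])
  also have "\<dots> = G {1..n}" using G_eq[of "{1..n}"] assms(2) by simp
  also have "\<dots> = (\<Sum>Q \<in> {Q. partition_on {1..n} Q}.
            star_list (rb_star scal \<theta> R) (map (block_term scal \<theta> R b) (blocks_by_max Q)))"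
    by (simp add: G_def)
  finally show ?thesis .
qed

end
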